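(* Take $R=\mathbb{F}_2$, $F=\hat{\mathbb{G}}_a$, $G=\hat{\mathbb{G}}_m$ in the tangent spectral sequence $H^*(\hat{\mathbb{G}}_a;\hat{\mathbb{G}}_a)(R)\Rightarrow H^*(\hat{\mathbb{G}}_a;\hat{\mathbb{G}}_m)(R)$, let $i\neq j$ and let $c$ be a coefficient. Then \[ d_{2^i+2^j}(c\,a_ia_j) = c^2\,(a_i^2a_{j+1}-a_{i+1}a_j^2). \]
   Context: $\hat{\mathbb{G}}_a$ is the formal group law $x+y$ and $\hat{\mathbb{G}}_m$ the formal group law $x+y+xy$ (equivalently $(1+x)(1+y)$). Lubin–Tate cochains $A^n(F;G)(R)$ are power series in $n$ variables with zero constant term with the alternating coboundary built from the group laws; $H^*(F;G)(R)$ is the cohomology. The tangent spectral sequence is the spectral sequence of the filtration of these cochains by leading total degree; its $E_1$-term is $H^*(\hat{\mathbb{G}}_a;\hat{\mathbb{G}}_a)(R)$, graded by the homogeneous degree of representing polynomials, and it converges to $H^*(\hat{\mathbb{G}}_a;\hat{\mathbb{G}}_m)(R)$; $d_r$ is the differential on the $E_r$-page. Over $\mathbb{F}_2$, $H^*(\hat{\mathbb{G}}_a;\hat{\mathbb{G}}_a)(\mathbb{F}_2)$ is the polynomial algebra on classes $a_i\in H^1$ represented by $x^{2^i}$; the product $a_ia_j\in H^2$ is represented by $x^{2^i}y^{2^j}$, and similarly for cubic monomials in three variables. *)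

theory Defs
  imports Main "HOL-Library.Z2"
begin

text \<open>Formal power series in the variables x_0, x_1, ... over a commutative ring.
  A monomial is an exponent function (nat => nat); a series is its coefficient function.\<close>

type_synonym mono = "nat \<Rightarrow> nat"
type_synonym 'a pser = "mono \<Rightarrow> 'a"

definition mdeg :: "mono \<Rightarrow> nat" where
  "mdeg m = (\<Sum>k\<in>{k. m k \<noteq> 0}. m k)"

definition in_vars :: "nat \<Rightarrow> ('a::zero) pser \<Rightarrow> bool" where
  "in_vars n f \<longleftrightarrow> (\<forall>m. f m \<noteq> 0 \<longrightarrow> (\<forall>k\<ge>n. m k = 0))"

definition cochain :: "nat \<Rightarrow> ('a::zero) pser \<Rightarrow> bool" where
  "cochain n f \<longleftrightarrow> in_vars n f \<and> f (\<lambda>_. 0) = 0"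

definition ps_one :: "('a::{zero,one}) pser" where
  "ps_one m = (if m = (\<lambda>_. 0) then 1 else 0)"

definition ps_mult :: "('a::comm_ring_1) pser \<Rightarrow> 'a pser \<Rightarrow> 'a pser" where
  "ps_mult f g m = (\<Sum>p\<in>{p. \<forall>k. p k \<le> m k}. f p * g (\<lambda>k. m k - p k))"

primrec ps_pow :: "('a::comm_ring_1) pser \<Rightarrow> nat \<Rightarrow> 'a pser" where
  "ps_pow f 0 = ps_one"
| "ps_pow f (Suc k) = ps_mult f (ps_pow f k)"

text \<open>The multiplicative formal group law G_m(u,v) = u + v + uv, and its formal inverse
  [-1](u) = (1+u)^{-1} - 1 = sum_{k>=1} (-u)^k (for u with zero constant term).\<close>
definition gm_add :: "('a::comm_ring_1) pser \<Rightarrow> 'a pser \<Rightarrow> 'a pser" where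
  "gm_add f g = (\<lambda>m. f m + g m + ps_mult f g m)"

definition gm_neg :: "('a::comm_ring_1) pser \<Rightarrow> 'a pser" where
  "gm_neg f = (\<lambda>m. \<Sum>k\<in>{1..mdeg m}. (- 1) ^ k * ps_pow f k m)"

text \<open>Face maps for F = G_a: for an n-cochain f, the (n+1)-variable series
  face 0 = f(x_1,...,x_n), face i = f(x_0,...,x_{i-1} +_F x_i,...,x_n) (1 <= i <= n),
  face (n+1) = f(x_0,...,x_{n-1}); with x +_F y = x + y (binomial expansion).\<close>
definition face :: "nat \<Rightarrow> nat \<Rightarrow> ('a::comm_ring_1) pser \<Rightarrow> 'a pser" where
  "face n i f = (\<lambda>m.
     if i = 0 then (if m 0 = 0 then f (\<lambda>k. m (Suc k)) else 0)
     else if i \<le> n then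
       of_nat ((m (i - 1) + m i) choose (m i)) *
       f (\<lambda>k. if k < i - 1 then m k else if k = i - 1 then m (i - 1) + m i else m (Suc k))
     else (if m n = 0 then f m else 0))"

definition cob :: "nat \<Rightarrow> ('a::comm_ring_1) pser \<Rightarrow> 'a pser" where
  "cob n f = foldr gm_add
     (map (\<lambda>i. if even i then face n i f else gm_neg (face n i f)) [0..<n + 2]) (\<lambda>_. 0)"

definition fil :: "nat \<Rightarrow> ('a::zero) pser \<Rightarrow> bool" where
  "fil s f \<longleftrightarrow> (\<forall>m. f m \<noteq> 0 \<longrightarrow> s \<le> mdeg m)"

definition hcomp :: "nat \<Rightarrow> ('a::zero) pser \<Rightarrow> 'a pser" where
  "hcomp d f = (\<lambda>m. if mdeg m = d then f m else 0)"

definition Zr :: "nat \<Rightarrow> nat \<Rightarrow> nat \<Rightarrow> ('a::comm_ring_1) pser \<Rightarrow> bool" where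
  "Zr n r s f \<longleftrightarrow> cochain n f \<and> fil s f \<and> fil (s + r) (cob n f)"

text \<open>Tangent spectral sequence, E_r^s = Z_r^s / (Z_{r-1}^{s+1} + d Z_{r-1}^{s-r+1}).
  tss_d n r s x y: for x a homogeneous degree-s representative (in cochain degree n) and
  y a homogeneous degree-(s+r) representative (in cochain degree n+1),
  x survives to E_r, y survives to E_r, and d_r [x] = [y] in E_r.\<close>
definition tss_d :: "nat \<Rightarrow> nat \<Rightarrow> nat \<Rightarrow> ('a::comm_ring_1) pser \<Rightarrow> 'a pser \<Rightarrow> bool" where
  "tss_d n r s x y \<longleftrightarrow>
     (\<exists>f y' u v. Zr n r s f \<and> hcomp s f = x \<and>
        Zr (Suc n) r (s + r) y' \<and> hcomp (s + r) y' = y \<and>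
        Zr (Suc n) (r - 1) (s + r + 1) u \<and> Zr n (r - 1) (s + 1) v \<and>
        cob n f = gm_add y' (gm_add u (cob n v)))"

definition monom :: "'a::zero \<Rightarrow> nat list \<Rightarrow> 'a pser" where
  "monom c e = (\<lambda>m. if m = (\<lambda>k. if k < length e then e ! k else 0) then c else 0)"

end

theory Submission imports Defs "HOL-Library.FuncSet" begin


definition fs :: "mono \<Rightarrow> bool" where "fs m \<longleftrightarrow> finite {k. m k \<noteq> 0}"

lemma box_fin:
  assumes "fs m" shows "finite {p::mono. \<forall>k. p k \<le> m k}"
proof -
  let ?S = "{k. m k \<noteq> 0}"
  have "{p::mono. \<forall>k. p k \<le> m k} \<subseteq> (\<lambda>g k. if k \<in> ?S then g k else 0) ` (PiE ?S (\<lambda>k. {..m k}))"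
  proof
    fix p :: mono assume p: "p \<in> {p. \<forall>k. p k \<le> m k}"
    have "p = (\<lambda>k. if k \<in> ?S then restrict p ?S k else 0)"
    proof
      fix k show "p k = (if k \<in> ?S then restrict p ?S k else 0)"
        using p[simplified, rule_format, of k] by (auto simp: restrict_apply)
    qed
    moreover have "restrict p ?S \<in> PiE ?S (\<lambda>k. {..m k})" using p by auto
    ultimately show "p \<in> (\<lambda>g k. if k \<in> ?S then g k else 0) ` (PiE ?S (\<lambda>k. {..m k}))" by blast
  qed
  moreover have "finite (PiE ?S (\<lambda>k. {..m k}))" using assms unfolding fs_def by (intro finite_PiE) auto
  ultimately show ?thesis using finite_subset by blast
qed

lemma box_inf:
  assumes "\<not> fs m" shows "infinite {p::mono. \<forall>k. p k \<le> m k}"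
proof
  let ?S = "{k. m k \<noteq> 0}"
  let ?g = "\<lambda>k. (\<lambda>j. if j = k then 1 else 0::nat)"
  assume fin: "finite {p::mono. \<forall>k. p k \<le> m k}"
  have "?g ` ?S \<subseteq> {p::mono. \<forall>k. p k \<le> m k}" by auto
  hence "finite (?g ` ?S)" using fin finite_subset by blast
  moreover have "inj_on ?g ?S" by (auto simp: inj_on_def fun_eq_iff)
  ultimately have "finite ?S" using finite_imageD by blast
  thus False using assms by (simp add: fs_def)
qed

lemma mdeg_nfs: "\<not> fs m \<Longrightarrow> mdeg m = 0"
  by (simp add: mdeg_def fs_def)

lemma mdeg_sub:
  assumes "finite S" "\<And>k. k \<notin> S \<Longrightarrow> m k = 0" shows "mdeg m = sum m S"
  unfolding mdeg_def apply (rule sum.mono_neutral_left) using assms by (auto, metis less_irrefl)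

lemma fs_sub: "finite S \<Longrightarrow> (\<And>k. k \<notin> S \<Longrightarrow> m k = 0) \<Longrightarrow> fs m"
  unfolding fs_def by (metis (mono_tags, lifting) finite_subset mem_Collect_eq subsetI)

lemma mdeg_split:
  assumes "fs m" "\<forall>k. p k \<le> m k" shows "mdeg m = mdeg p + mdeg (\<lambda>k. m k - p k)"
proof -
  let ?S = "{k. m k \<noteq> 0}"
  have fin: "finite ?S" using assms fs_def by auto
  have "mdeg m = sum m ?S" by (rule mdeg_sub) (use fin in auto)
  moreover have "mdeg p = sum p ?S" by (rule mdeg_sub) (use fin assms in \<open>auto, metis le_zero_eq\<close>)
  moreover have "mdeg (\<lambda>k. m k - p k) = sum (\<lambda>k. m k - p k) ?S" by (rule mdeg_sub) (use fin in auto)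
  moreover have "sum m ?S = sum p ?S + sum (\<lambda>k. m k - p k) ?S"
    by (simp add: sum.distrib[symmetric] assms)
  ultimately show ?thesis by simp
qed

lemma ps_mult_nz:
  assumes "ps_mult f g m \<noteq> 0"
  shows "fs m \<and> (\<exists>p. (\<forall>k. p k \<le> m k) \<and> f p \<noteq> 0 \<and> g (\<lambda>k. m k - p k) \<noteq> 0)"
proof -
  have fin: "finite {p::mono. \<forall>k. p k \<le> m k}"
    using assms unfolding ps_mult_def using sum.infinite by blast
  hence "fs m" using box_inf by blast
  moreover obtain p where "p \<in> {p::mono. \<forall>k. p k \<le> m k}" "f p * g (\<lambda>k. m k - p k) \<noteq> 0"
    using assms unfolding ps_mult_def by (meson sum.neutral)
  ultimately show ?thesis by auto
qed

lemma fil_mult: "fil a f \<Longrightarrow> fil b g \<Longrightarrow> fil (a + b) (ps_mult f g)"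
  unfolding fil_def
proof (intro allI impI)
  fix m assume A: "\<forall>m. f m \<noteq> 0 \<longrightarrow> a \<le> mdeg m" "\<forall>m. g m \<noteq> 0 \<longrightarrow> b \<le> mdeg m"
    and "ps_mult f g m \<noteq> 0"
  then obtain p where "fs m" "\<forall>k. p k \<le> m k" "f p \<noteq> 0" "g (\<lambda>k. m k - p k) \<noteq> 0"
    using ps_mult_nz by blast
  then show "a + b \<le> mdeg m" using A mdeg_split by fastforce
qed

lemma fil_mono: "fil b f \<Longrightarrow> a \<le> b \<Longrightarrow> fil a f"
  unfolding fil_def by force

lemma fil_add: "fil a f \<Longrightarrow> fil a g \<Longrightarrow> fil a (\<lambda>m. f m + g m :: 'a::monoid_add)"
  unfolding fil_def by (metis add.right_neutral add_0)

lemma fil_diff: "fil a f \<Longrightarrow> fil a g \<Longrightarrow> fil a (\<lambda>m. f m - g m :: 'a::ab_group_add)"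
  unfolding fil_def by (metis diff_0 diff_zero minus_zero)

lemma fil_uminus: "fil a f \<Longrightarrow> fil a (\<lambda>m. - f m :: 'a::ab_group_add)"
  unfolding fil_def by simp

lemma fil_zero[simp]: "fil a (\<lambda>_. 0)" by (simp add: fil_def)
lemma fil_0[simp]: "fil 0 f" by (simp add: fil_def)

lemma fil_at: "fil (Suc (mdeg m)) f \<Longrightarrow> f m = 0"
  unfolding fil_def by force

lemma fil_eq0: assumes "\<And>t. fil t f" shows "f = (\<lambda>_. 0)"
proof
  fix m show "f m = 0" using fil_at[of m f] assms by blast
qed

lemma ps_mult_add1: "ps_mult (\<lambda>m. f m + g m) h = (\<lambda>m. ps_mult f h m + ps_mult g h m)"
  by (simp add: ps_mult_def fun_eq_iff sum.distrib distrib_right)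
lemma ps_mult_add2: "ps_mult h (\<lambda>m. f m + g m) = (\<lambda>m. ps_mult h f m + ps_mult h g m)"
  by (simp add: ps_mult_def fun_eq_iff sum.distrib distrib_left)
lemma ps_mult_diff1: "ps_mult (\<lambda>m. f m - g m) h = (\<lambda>m. ps_mult f h m - ps_mult g h m)"
  by (simp add: ps_mult_def fun_eq_iff sum_subtractf left_diff_distrib)
lemma ps_mult_diff2: "ps_mult h (\<lambda>m. f m - g m) = (\<lambda>m. ps_mult h f m - ps_mult h g m)"
  by (simp add: ps_mult_def fun_eq_iff sum_subtractf right_diff_distrib)
lemma ps_mult_uminus1: "ps_mult (\<lambda>m. - f m) h = (\<lambda>m. - ps_mult f h m)"
  by (simp add: ps_mult_def fun_eq_iff sum_negf)
lemma ps_mult_01[simp]: "ps_mult (\<lambda>_. 0) h = (\<lambda>_. 0)"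
  by (simp add: ps_mult_def fun_eq_iff)
lemma ps_mult_02[simp]: "ps_mult h (\<lambda>_. 0) = (\<lambda>_. 0)"
  by (simp add: ps_mult_def fun_eq_iff)

lemma ps_mult_one:
  assumes "\<And>m. \<not> fs m \<Longrightarrow> f m = 0" shows "ps_mult f ps_one = f"
proof
  fix m
  show "ps_mult f ps_one m = f m"
  proof (cases "fs m")
    case True
    have "ps_mult f ps_one m = (\<Sum>p\<in>{p. \<forall>k. p k \<le> m k}. if p = m then f p else 0)"
      unfolding ps_mult_def ps_one_def
    proof (intro sum.cong refl)
      fix p assume p: "p \<in> {p. \<forall>k. p k \<le> m k}"
      have "((\<lambda>k. m k - p k) = (\<lambda>_. 0)) = (p = m)"
      proof
        assume "(\<lambda>k. m k - p k) = (\<lambda>_. 0)"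
        hence "\<And>k. m k - p k = 0" by meson
        thus "p = m" using p by (intro ext) (simp add: le_antisym)
      qed simp
      thus "f p * (if (\<lambda>k. m k - p k) = (\<lambda>_. 0) then 1 else 0) = (if p = m then f p else 0)" by simp
    qed
    also have "\<dots> = f m" using box_fin[OF True] by (subst sum.delta) auto
    finally show ?thesis .
  next
    case False
    have "f m = 0" using assms False by blast
    thus ?thesis unfolding ps_mult_def using sum.infinite[OF box_inf[OF False]] by simp
  qed
qed

lemma fil1_nfs: "fil (Suc a) f \<Longrightarrow> \<not> fs m \<Longrightarrow> f m = 0"
  unfolding fil_def using mdeg_nfs by force

lemma fil_one: "fil 0 ps_one" by simp

lemma fil_pow: "fil a f \<Longrightarrow> fil (k * a) (ps_pow f k)"
proof (induction k)
  case (Suc k)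
  have "fil (a + k*a) (ps_mult f (ps_pow f k))" by (rule fil_mult[OF Suc.prems Suc.IH[OF Suc.prems]])
  thus ?case by (simp only: mult_Suc ps_pow.simps)
qed simp

lemma ps_pow1: "fil (Suc a) f \<Longrightarrow> ps_pow f 1 = f"
  unfolding One_nat_def ps_pow.simps by (rule ps_mult_one, erule fil1_nfs)

lemma ps_pow2: "fil (Suc a) f \<Longrightarrow> ps_pow f 2 = ps_mult f f"
proof -
  assume "fil (Suc a) f"
  hence "ps_pow f 1 = f" by (rule ps_pow1)
  thus ?thesis unfolding numeral_2_eq_2 by (simp only: ps_pow.simps One_nat_def)
qed



lemma in_vars_mult: "in_vars n f \<Longrightarrow> in_vars n g \<Longrightarrow> in_vars n (ps_mult f g)"
  unfolding in_vars_def
proof (intro allI impI)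
  fix m k assume A: "\<forall>m. f m \<noteq> 0 \<longrightarrow> (\<forall>k\<ge>n. m k = 0)" "\<forall>m. g m \<noteq> 0 \<longrightarrow> (\<forall>k\<ge>n. m k = 0)"
    and "ps_mult f g m \<noteq> 0" "n \<le> k"
  then obtain p where "\<forall>k. p k \<le> m k" "f p \<noteq> 0" "g (\<lambda>k. m k - p k) \<noteq> 0"
    using ps_mult_nz by blast
  then have "p k = 0" "m k - p k = 0" using A \<open>n \<le> k\<close> by blast+
  thus "m k = 0" by simp
qed

lemma in_vars_one: "in_vars n ps_one"
  unfolding in_vars_def ps_one_def by (auto split: if_splits)

lemma in_vars_pow: "in_vars n f \<Longrightarrow> in_vars n (ps_pow f k)"
  by (induction k) (simp_all add: in_vars_one in_vars_mult)

lemma in_vars_add: "in_vars n f \<Longrightarrow> in_vars n g \<Longrightarrow> in_vars n (\<lambda>m. f m + g m :: 'a::monoid_add)"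
  unfolding in_vars_def by (metis add.right_neutral add_0)

lemma in_vars_diff: "in_vars n f \<Longrightarrow> in_vars n g \<Longrightarrow> in_vars n (\<lambda>m. f m - g m :: 'a::ab_group_add)"
  unfolding in_vars_def by (metis diff_0 diff_zero minus_zero)

lemma in_vars_zero[simp]: "in_vars n (\<lambda>_. 0)" by (simp add: in_vars_def)

lemma in_vars_gm_add: "in_vars n f \<Longrightarrow> in_vars n g \<Longrightarrow> in_vars n (gm_add f g)"
  unfolding gm_add_def by (intro in_vars_add in_vars_mult)

lemma in_vars_gm_neg: "in_vars n f \<Longrightarrow> in_vars n (gm_neg f)"
  unfolding in_vars_def gm_neg_def
proof (intro allI impI)
  fix m k assume A: "\<forall>m. f m \<noteq> 0 \<longrightarrow> (\<forall>k\<ge>n. m k = 0)"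
    and B: "(\<Sum>k\<in>{1..mdeg m}. (- 1) ^ k * ps_pow f k m) \<noteq> 0" and k: "n \<le> k"
  from B obtain l where "ps_pow f l m \<noteq> 0" by (metis (no_types, lifting) mult_zero_right sum.neutral)
  moreover have "in_vars n f" using A by (simp add: in_vars_def)
  hence "in_vars n (ps_pow f l)" by (rule in_vars_pow)
  ultimately show "m k = 0" using k by (simp add: in_vars_def)
qed

lemma fil_gm_add: "fil a f \<Longrightarrow> fil a g \<Longrightarrow> fil a (gm_add f g)"
  unfolding gm_add_def
  by (intro fil_add) (auto intro: fil_mono[OF fil_mult])

lemma fil_gm_neg: "fil a f \<Longrightarrow> fil a (gm_neg f)"
  unfolding fil_def gm_neg_def
proof (intro allI impI)
  fix m assume A: "\<forall>m. f m \<noteq> 0 \<longrightarrow> a \<le> mdeg m"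
    and B: "(\<Sum>k\<in>{1..mdeg m}. (- 1) ^ k * ps_pow f k m) \<noteq> 0"
  from B obtain l where l: "l \<in> {1..mdeg m}" "ps_pow f l m \<noteq> 0"
    by (metis (no_types, lifting) mult_zero_right sum.neutral)
  have "fil a f" using A by (simp add: fil_def)
  hence "fil (l * a) (ps_pow f l)" by (rule fil_pow)
  hence "l * a \<le> mdeg m" using l(2) by (simp add: fil_def)
  moreover have "a \<le> l * a" using l by simp
  ultimately show "a \<le> mdeg m" by linarith
qed

lemma gm_neg_exp:
  fixes f :: "('a::comm_ring_1) pser"
  assumes f: "fil (Suc b) f"
  shows "fil (3 * Suc b) (\<lambda>m. gm_neg f m - (- f m + ps_mult f f m))"
  unfolding fil_def
proof (intro allI impI, rule ccontr)
  let ?a = "Suc b"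
  fix m assume ne: "gm_neg f m - (- f m + ps_mult f f m) \<noteq> 0" and lt: "\<not> 3 * ?a \<le> mdeg m"
  have z: "ps_pow f k m = 0" if "3 \<le> k" for k
  proof -
    have "fil (k * ?a) (ps_pow f k)" using fil_pow[OF f] .
    moreover have "3 * ?a \<le> k * ?a" by (rule mult_le_mono1) (use that in simp)
    ultimately show ?thesis using lt unfolding fil_def by (meson le_trans)
  qed
  have ff: "fil (2 * ?a) (ps_mult f f)" using fil_mult[OF f f] by (simp add: mult_2)
  have p1: "ps_pow f 1 = f" using ps_pow1[OF f] .
  have p2: "ps_pow f 2 = ps_mult f f" using ps_pow2[OF f] .
  have "gm_neg f m = (\<Sum>k\<in>{1..mdeg m}. if k \<le> 2 then (- 1) ^ k * ps_pow f k m else 0)"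
    unfolding gm_neg_def by (intro sum.cong refl) (auto simp: z)
  also have "\<dots> = (\<Sum>k\<in>{1..min (mdeg m) 2}. (- 1) ^ k * ps_pow f k m)"
    by (rule sum.mono_neutral_cong_right) auto
  finally have g: "gm_neg f m = (\<Sum>k\<in>{1..min (mdeg m) 2}. (- 1) ^ k * ps_pow f k m)" .
  consider "mdeg m = 0" | "mdeg m = 1" | "2 \<le> mdeg m" by linarith
  then show False
  proof cases
    case 1
    have "f m = 0" "ps_mult f f m = 0" using f ff 1 unfolding fil_def by auto
    thus False using ne g 1 by simp
  next
    case 2
    have "ps_mult f f m = 0" using ff 2 unfolding fil_def by fastforce
    thus False using ne g 2 p1 by simp
  next
    case 3
    hence "min (mdeg m) 2 = 2" by simp
    hence "gm_neg f m = - f m + ps_mult f f m" using g p1 p2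
      by (simp add: numeral_2_eq_2)
    thus False using ne by simp
  qed
qed



lemma mdeg_lt: "(\<And>k. N \<le> k \<Longrightarrow> m k = 0) \<Longrightarrow> mdeg m = sum m {..<N}"
  by (rule mdeg_sub) auto

lemma merge_sum:
  "j < n \<Longrightarrow> sum (\<lambda>k. if k < j then m k else if k = j then m j + m (Suc j) else m (Suc k)) {..<n}
     = sum m {..<Suc n}"
proof (induction n)
  case 0 thus ?case by simp
next
  case (Suc n)
  show ?case
  proof (cases "j < n")
    case True thus ?thesis using Suc by simp
  next
    case False
    hence jn: "j = n" using Suc by simp
    have "sum (\<lambda>k. if k < j then m k else if k = j then m j + m (Suc j) else m (Suc k)) {..<n}
          = sum m {..<n}" using jn by (intro sum.cong) auto
    thus ?thesis using jn by (simp add: add.assoc)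
  qed
qed

lemma shift_zero: "(\<And>k. n \<le> k \<Longrightarrow> m (Suc k) = 0) \<Longrightarrow> Suc n \<le> k \<Longrightarrow> m k = 0"
proof -
  assume z: "\<And>k. n \<le> k \<Longrightarrow> m (Suc k) = 0" and k: "Suc n \<le> k"
  then obtain k' where "k = Suc k'" "n \<le> k'" by (cases k) auto
  thus "m k = 0" using z by simp
qed

lemma in_vars_face:
  assumes fv: "in_vars n f" shows "in_vars (Suc n) (face n i f)"
  unfolding in_vars_def
proof (intro allI impI)
  fix m k assume ne: "face n i f m \<noteq> 0" and k: "Suc n \<le> k"
  have A: "\<And>m k. f m \<noteq> 0 \<Longrightarrow> n \<le> k \<Longrightarrow> m k = 0" using fv by (simp add: in_vars_def)
  obtain k' where kk: "k = Suc k'" "n \<le> k'" using k by (cases k) auto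
  show "m k = 0"
  proof (cases "i = 0")
    case True
    have "face n i f m = (if m 0 = 0 then f (\<lambda>k. m (Suc k)) else 0)" using True by (simp add: face_def)
    hence "f (\<lambda>k. m (Suc k)) \<noteq> 0" using ne by presburger
    from A[OF this kk(2)] kk show ?thesis by simp
  next
    case False
    show ?thesis
    proof (cases "i \<le> n")
      case True
      let ?m' = "\<lambda>k. if k < i - 1 then m k else if k = i - 1 then m (i - 1) + m i else m (Suc k)"
      have "face n i f m = of_nat ((m (i - 1) + m i) choose (m i)) * f ?m'"
        using True False by (simp add: face_def)
      hence "f ?m' \<noteq> 0" using ne by force
      from A[OF this kk(2)] have "?m' k' = 0" .
      moreover have "\<not> k' < i - 1" "k' \<noteq> i - 1" using kk True False by auto
      ultimately show ?thesis using kk by simp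
    next
      case c2: False
      have "face n i f m = (if m n = 0 then f m else 0)" using c2 False by (simp add: face_def)
      hence "f m \<noteq> 0" using ne by presburger
      from A[OF this] k show ?thesis by simp
    qed
  qed
qed

lemma fil_face:
  assumes fv: "in_vars n f" and ff: "fil a f" shows "fil a (face n i f)"
  unfolding fil_def
proof (intro allI impI)
  fix m assume ne: "face n i f m \<noteq> 0"
  have A: "\<And>m. f m \<noteq> 0 \<Longrightarrow> (\<forall>k\<ge>n. m k = 0)" using fv by (simp add: in_vars_def)
  have B: "\<And>m. f m \<noteq> 0 \<Longrightarrow> a \<le> mdeg m" using ff by (simp add: fil_def)
  show "a \<le> mdeg m"
  proof (cases "i = 0")
    case True
    hence m0: "m 0 = 0" and fm: "f (\<lambda>k. m (Suc k)) \<noteq> 0" using ne by (auto simp: face_def split: if_splits)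
    have z: "\<And>k. n \<le> k \<Longrightarrow> m (Suc k) = 0" using A[OF fm] by simp
    have "mdeg m = sum m {..<Suc n}"
      by (rule mdeg_lt, rule shift_zero[of n m, OF z])
    also have "\<dots> = sum (\<lambda>k. m (Suc k)) {..<n}" unfolding sum.lessThan_Suc_shift using m0 by simp
    also have "\<dots> = mdeg (\<lambda>k. m (Suc k))" by (rule mdeg_lt[symmetric]) (simp add: z)
    finally show ?thesis using B[OF fm] by simp
  next
    case False
    show ?thesis
    proof (cases "i \<le> n")
      case True
      define j where "j = i - 1"
      have ij: "i = Suc j" using False j_def by simp
      have jn: "j < n" using True ij by simp
      let ?m' = "\<lambda>k. if k < j then m k else if k = j then m j + m (Suc j) else m (Suc k)"
      have "face n i f m = of_nat (m j + m (Suc j) choose m (Suc j)) * f ?m'"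
        using True unfolding face_def ij diff_Suc_1 by simp
      hence fm: "f ?m' \<noteq> 0" using ne by auto
      have z': "\<And>k. n \<le> k \<Longrightarrow> ?m' k = 0" using A[OF fm] by blast
      have z: "m (Suc k) = 0" if "n \<le> k" for k
      proof -
        have "?m' k = 0" using z' that by blast
        moreover have "\<not> k < j" "k \<noteq> j" using jn that by auto
        ultimately show ?thesis by simp
      qed
      have "mdeg m = sum m {..<Suc n}"
        by (rule mdeg_lt, rule shift_zero[of n m, OF z])
      also have "\<dots> = sum ?m' {..<n}" by (rule merge_sum[OF jn, symmetric])
      also have "\<dots> = mdeg ?m'" by (rule mdeg_lt[symmetric]) (use z' in blast)
      finally show ?thesis using B[OF fm] by simp
    next
      case c2: False
      hence "f m \<noteq> 0" using ne False by (auto simp: face_def split: if_splits)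
      thus ?thesis using B by blast
    qed
  qed
qed

primrec lsum :: "('a::comm_ring_1) pser list \<Rightarrow> 'a pser" where
  "lsum [] = (\<lambda>_. 0)"
| "lsum (t # ts) = (\<lambda>m. t m + lsum ts m)"

primrec pw :: "('a::comm_ring_1) pser list \<Rightarrow> 'a pser" where
  "pw [] = (\<lambda>_. 0)"
| "pw (t # ts) = (\<lambda>m. ps_mult t (lsum ts) m + pw ts m)"

lemma fil_lsum: "(\<And>t. t \<in> set ts \<Longrightarrow> fil a t) \<Longrightarrow> fil a (lsum ts)"
  by (induction ts) (auto intro: fil_add)

lemma fil_pw: "(\<And>t. t \<in> set ts \<Longrightarrow> fil a t) \<Longrightarrow> fil (2 * a) (pw ts)"
proof (induction ts)
  case (Cons t ts)
  have "fil (a + a) (ps_mult t (lsum ts))" using Cons.prems by (intro fil_mult fil_lsum) auto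
  thus ?case using Cons by (auto intro!: fil_add simp: mult_2)
qed simp

lemma fil_foldr: "(\<And>t. t \<in> set ts \<Longrightarrow> fil a t) \<Longrightarrow> fil a (foldr gm_add ts (\<lambda>_. 0))"
  by (induction ts) (auto intro: fil_gm_add)

lemma in_vars_foldr: "(\<And>t. t \<in> set ts \<Longrightarrow> in_vars n t) \<Longrightarrow> in_vars n (foldr gm_add ts (\<lambda>_. 0))"
  by (induction ts) (auto intro: in_vars_gm_add)

lemma foldr_exp:
  fixes ts :: "('a::comm_ring_1) pser list"
  assumes "\<And>t. t \<in> set ts \<Longrightarrow> fil a t"
  shows "fil (3 * a) (\<lambda>m. foldr gm_add ts (\<lambda>_. 0) m - (lsum ts m + pw ts m))"
  using assms
proof (induction ts)
  case Nil thus ?case by simp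
next
  case (Cons t ts)
  let ?R = "foldr gm_add ts (\<lambda>_. 0)"
  have ft: "fil a t" using Cons.prems by simp
  have IH: "fil (3 * a) (\<lambda>m. ?R m - (lsum ts m + pw ts m))" using Cons by simp
  have pwf: "fil (2 * a) (pw ts)" using Cons.prems by (intro fil_pw) auto
  have "fil (2 * a) (\<lambda>m. ?R m - lsum ts m)"
  proof -
    have "fil (2 * a) (\<lambda>m. (?R m - (lsum ts m + pw ts m)) + pw ts m)"
      by (intro fil_add fil_mono[OF IH] pwf) simp
    thus ?thesis by (simp add: algebra_simps)
  qed
  hence "fil (a + 2 * a) (ps_mult t (\<lambda>m. ?R m - lsum ts m))" by (rule fil_mult[OF ft])
  hence P: "fil (3 * a) (\<lambda>m. ps_mult t ?R m - ps_mult t (lsum ts) m)"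
    by (simp add: ps_mult_diff2 algebra_simps numeral_3_eq_3)
  have "fil (3 * a) (\<lambda>m. (?R m - (lsum ts m + pw ts m)) + (ps_mult t ?R m - ps_mult t (lsum ts) m))"
    by (intro fil_add IH P)
  moreover have "foldr gm_add (t # ts) (\<lambda>_. 0) = (\<lambda>m. t m + ?R m + ps_mult t ?R m)"
    by (simp add: gm_add_def)
  ultimately show ?case by (simp add: algebra_simps)
qed

lemma foldr_exp1:
  fixes ts :: "('a::comm_ring_1) pser list"
  assumes "\<And>t. t \<in> set ts \<Longrightarrow> fil a t"
  shows "fil (2 * a) (\<lambda>m. foldr gm_add ts (\<lambda>_. 0) m - lsum ts m)"
proof -
  have "fil (2 * a) (\<lambda>m. (foldr gm_add ts (\<lambda>_. 0) m - (lsum ts m + pw ts m)) + pw ts m)"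
    by (intro fil_add fil_mono[OF foldr_exp[OF assms]] fil_pw assms) auto
  thus ?thesis by (simp add: algebra_simps)
qed

definition cterms :: "nat \<Rightarrow> ('a::comm_ring_1) pser \<Rightarrow> 'a pser list" where
  "cterms n f = map (\<lambda>i. if even i then face n i f else gm_neg (face n i f)) [0..<n + 2]"

lemma cob_cterms: "cob n f = foldr gm_add (cterms n f) (\<lambda>_. 0)"
  by (simp add: cob_def cterms_def)

lemma fil_cob: assumes "in_vars n f" "fil a f" shows "fil a (cob n f)"
proof -
  have "\<And>i. fil a (face n i f)" using assms by (intro fil_face)
  hence "\<And>i. fil a (gm_neg (face n i f))" by (intro fil_gm_neg)
  thus ?thesis unfolding cob_cterms cterms_def using \<open>\<And>i. fil a (face n i f)\<close>
    by (intro fil_foldr) auto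
qed

lemma in_vars_cob: assumes "in_vars n f" shows "in_vars (Suc n) (cob n f)"
proof -
  have "\<And>i. in_vars (Suc n) (face n i f)" using assms by (intro in_vars_face)
  hence "\<And>i. in_vars (Suc n) (gm_neg (face n i f))" by (intro in_vars_gm_neg)
  thus ?thesis unfolding cob_cterms cterms_def using \<open>\<And>i. in_vars (Suc n) (face n i f)\<close>
    by (intro in_vars_foldr) auto
qed

lemma face_zero: "face n i (\<lambda>_. 0) = (\<lambda>_. 0)"
  by (simp add: face_def fun_eq_iff)

lemma gm_neg_zero: "gm_neg (\<lambda>_. 0::'a::comm_ring_1) = (\<lambda>_. 0)"
proof -
  have "ps_pow (\<lambda>_. 0::'a) k = (\<lambda>_. 0)" if "1 \<le> k" for k
    using that by (cases k) auto
  thus ?thesis unfolding gm_neg_def by (simp add: fun_eq_iff)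
qed

lemma cob_zero: "cob n (\<lambda>_. 0::'a::comm_ring_1) = (\<lambda>_. 0)"
proof -
  have "foldr gm_add ts (\<lambda>_. 0) = (\<lambda>_. 0::'a)" if "\<And>t. t \<in> set ts \<Longrightarrow> t = (\<lambda>_. 0)" for ts :: "'a pser list"
    using that by (induction ts) (auto simp: gm_add_def)
  moreover have "\<And>t. t \<in> set (cterms n (\<lambda>_. 0::'a)) \<Longrightarrow> t = (\<lambda>_. 0)"
    by (auto simp: cterms_def face_zero gm_neg_zero)
  ultimately show ?thesis by (simp add: cob_cterms)
qed



lemma even_choose_pow2:
  assumes "0 < t" "t < 2 ^ a" shows "even ((2::nat) ^ a choose t)"
proof (rule ccontr)
  assume odd: "odd ((2::nat) ^ a choose t)"
  have "t * (2 ^ a choose t) = 2 ^ a * ((2 ^ a - 1) choose (t - 1))"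
    using times_binomial_minus1_eq[OF assms(1)] .
  hence "(2::nat) ^ a dvd t * (2 ^ a choose t)" by simp
  moreover have "coprime ((2::nat) ^ a) (2 ^ a choose t)"
    using odd by (simp add: coprime_commute)
  ultimately have "(2::nat) ^ a dvd t" using coprime_dvd_mult_left_iff by blast
  hence "2 ^ a \<le> t" using assms(1) by (simp add: dvd_imp_le)
  thus False using assms(2) by simp
qed

lemma of_nat_bit: "(of_nat n :: bit) = (if even n then 0 else 1)"
  by (induction n) auto

lemma choose_bit:
  assumes "t \<le> 2 ^ a"
  shows "(of_nat ((2::nat) ^ a choose t) :: bit) = (if t = 0 \<or> t = 2 ^ a then 1 else 0)"
proof (cases "t = 0 \<or> t = 2 ^ a")
  case True thus ?thesis by auto
next
  case False
  hence "0 < t" "t < 2 ^ a" using assms by auto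
  thus ?thesis using even_choose_pow2 False by (simp add: of_nat_bit)
qed

definition mon :: "'a::zero \<Rightarrow> mono \<Rightarrow> 'a pser" where
  "mon c \<mu> = (\<lambda>m. if m = \<mu> then c else 0)"

definition E :: "nat list \<Rightarrow> mono" where
  "E e = (\<lambda>k. if k < length e then e ! k else 0)"

lemma monom_E: "monom c e = mon c (E e)"
  by (simp add: monom_def mon_def E_def)

lemma face0_mon: "face n 0 (mon c \<mu>) = mon c (\<lambda>k. case k of 0 \<Rightarrow> 0 | Suc j \<Rightarrow> \<mu> j)"
proof
  fix m
  have "(m = (\<lambda>k. case k of 0 \<Rightarrow> 0 | Suc j \<Rightarrow> \<mu> j)) = (m 0 = 0 \<and> (\<lambda>k. m (Suc k)) = \<mu>)"
    by (auto simp: fun_eq_iff split: nat.splits)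
  thus "face n 0 (mon c \<mu>) m = mon c (\<lambda>k. case k of 0 \<Rightarrow> 0 | Suc j \<Rightarrow> \<mu> j) m"
    by (simp add: face_def mon_def)
qed

lemma facelast_mon: "n < i \<Longrightarrow> \<mu> n = 0 \<Longrightarrow> face n i (mon c \<mu>) = mon c \<mu>"
  by (auto simp: face_def mon_def fun_eq_iff)

lemma facemid_mon:
  fixes c :: bit
  assumes i: "1 \<le> i" "i \<le> n" and mu: "\<mu> (i - 1) = 2 ^ a"
  shows "face n i (mon c \<mu>) = (\<lambda>m.
     mon c (\<lambda>k. if k < i then \<mu> k else if k = i then 0 else \<mu> (k - 1)) m
   + mon c (\<lambda>k. if k < i - 1 then \<mu> k else if k = i - 1 then 0 else \<mu> (k - 1)) m)"
proof
  fix m :: mono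
  let ?mg = "\<lambda>k. if k < i - 1 then m k else if k = i - 1 then m (i - 1) + m i else m (Suc k)"
  let ?s1 = "\<lambda>k. if k < i then \<mu> k else if k = i then 0 else \<mu> (k - 1)"
  let ?s2 = "\<lambda>k. if k < i - 1 then \<mu> k else if k = i - 1 then 0 else \<mu> (k - 1)"
  have fv: "face n i (mon c \<mu>) m = of_nat ((m (i - 1) + m i) choose (m i)) * (if ?mg = \<mu> then c else 0)"
    using i by (simp add: face_def mon_def)
  have e1: "(m = ?s1) = (?mg = \<mu> \<and> m i = 0)"
  proof
    assume "m = ?s1" thus "?mg = \<mu> \<and> m i = 0" using i by (auto simp: fun_eq_iff)
  next
    assume h: "?mg = \<mu> \<and> m i = 0"
    show "m = ?s1"
    proof
      fix k
      have hk: "?mg k = \<mu> k" for k by (rule fun_cong[OF conjunct1[OF h]])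
      consider "k < i - 1" | "k = i - 1" | "k = i" | "i < k" by linarith
      thus "m k = ?s1 k"
      proof cases
        case 1 hence "k < i" by linarith
        thus ?thesis using hk[of k] 1 by simp
      next
        case 2 thus ?thesis using hk[of k] i h by simp
      next
        case 3 thus ?thesis using h by simp
      next
        case 4
        hence "\<not> k - 1 < i - 1" "k - 1 \<noteq> i - 1" "Suc (k - 1) = k" "\<not> k < i" "k \<noteq> i" "\<not> k < i - 1" "k \<noteq> i - 1" using i by auto
        thus ?thesis using hk[of "k - 1"] by simp
      qed
    qed
  qed
  have e2: "(m = ?s2) = (?mg = \<mu> \<and> m (i - 1) = 0)"
  proof
    assume "m = ?s2" thus "?mg = \<mu> \<and> m (i - 1) = 0" using i mu by (auto simp: fun_eq_iff)
  next
    assume h: "?mg = \<mu> \<and> m (i - 1) = 0"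
    show "m = ?s2"
    proof
      fix k
      have hk: "?mg k = \<mu> k" for k by (rule fun_cong[OF conjunct1[OF h]])
      consider "k < i - 1" | "k = i - 1" | "k = i" | "i < k" by linarith
      thus "m k = ?s2 k"
      proof cases
        case 1 hence "k < i" by linarith
        thus ?thesis using hk[of k] 1 by simp
      next
        case 2 thus ?thesis using h by simp
      next
        case 3
        have "m (i - 1) + m i = \<mu> (i - 1)" using hk[of "i - 1"] by simp
        hence A: "m i = \<mu> (i - 1)" using h by simp
        have "\<not> i < i - 1" "i \<noteq> i - 1" using i by auto
        hence B: "?s2 i = \<mu> (i - 1)" by simp
        show ?thesis using A B 3 by metis
      next
        case 4
        hence "\<not> k - 1 < i - 1" "k - 1 \<noteq> i - 1" "Suc (k - 1) = k" "\<not> k < i" "k \<noteq> i" "\<not> k < i - 1" "k \<noteq> i - 1" using i by auto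
        thus ?thesis using hk[of "k - 1"] by simp
      qed
    qed
  qed
  show "face n i (mon c \<mu>) m = mon c ?s1 m + mon c ?s2 m"
  proof (cases "?mg = \<mu>")
    case True
    from fun_cong[OF True, of "i - 1"] have "m (i - 1) + m i = \<mu> (i - 1)" by simp
    hence sum: "m (i - 1) + m i = 2 ^ a" using mu by simp
    have cb: "(of_nat ((m (i - 1) + m i) choose (m i)) :: bit) = (if m i = 0 \<or> m i = 2 ^ a then 1 else 0)"
      unfolding sum by (rule choose_bit) (use sum in linarith)
    have pos: "(2::nat) ^ a \<noteq> 0" by simp
    consider "m i = 0" | "m (i - 1) = 0" | "m i \<noteq> 0" "m (i - 1) \<noteq> 0" by blast
    thus ?thesis
    proof cases
      case 1
      hence "m = ?s1" "m \<noteq> ?s2" using e1 e2 True sum pos by auto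
      thus ?thesis using fv cb 1 True by (simp add: mon_def)
    next
      case 2
      hence "m = ?s2" "m \<noteq> ?s1" "m i = 2 ^ a" using e1 e2 True sum pos by auto
      thus ?thesis using fv cb 2 True by (simp add: mon_def)
    next
      case 3
      hence "m \<noteq> ?s2" "m \<noteq> ?s1" "m i \<noteq> 2 ^ a" using e1 e2 sum by auto
      thus ?thesis using fv cb 3 by (simp add: mon_def)
    qed
  next
    case False thus ?thesis using fv e1 e2 by (simp add: mon_def)
  qed
qed



lemma face_add: "face n i (\<lambda>m. f m + g m) = (\<lambda>m. face n i f m + face n i g m)"
  by (simp add: face_def fun_eq_iff distrib_left)

lemma fs_E: "fs (E l)"
  by (rule fs_sub[of "{..<length l}"]) (auto simp: E_def)

lemma mon_mult_gen:
  assumes "fs \<mu>" "fs \<nu>"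
  shows "ps_mult (mon a \<mu>) (mon b \<nu>) = mon (a * b) (\<lambda>k. \<mu> k + \<nu> k)"
proof
  fix m :: mono
  have tm: "mon a \<mu> p * mon b \<nu> (\<lambda>k. m k - p k) = (if p = \<mu> then (if m = (\<lambda>k. \<mu> k + \<nu> k) then a * b else 0) else 0)"
    if "p \<in> {p. \<forall>k. p k \<le> m k}" for p
  proof (cases "p = \<mu>")
    case True
    have "((\<lambda>k. m k - \<mu> k) = \<nu>) = (m = (\<lambda>k. \<mu> k + \<nu> k))"
    proof
      assume "(\<lambda>k. m k - \<mu> k) = \<nu>"
      hence "\<And>k. m k - \<mu> k = \<nu> k" by meson
      moreover have "\<And>k. \<mu> k \<le> m k" using that True by simp
      ultimately show "m = (\<lambda>k. \<mu> k + \<nu> k)" by (metis le_add_diff_inverse)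
    qed auto
    thus ?thesis using True by (simp add: mon_def)
  qed (simp add: mon_def)
  show "ps_mult (mon a \<mu>) (mon b \<nu>) m = mon (a * b) (\<lambda>k. \<mu> k + \<nu> k) m"
  proof (cases "m = (\<lambda>k. \<mu> k + \<nu> k)")
    case True
    have "fs m" unfolding True using assms unfolding fs_def
      by (rule_tac finite_subset[of _ "{k. \<mu> k \<noteq> 0} \<union> {k. \<nu> k \<noteq> 0}"]) auto
    hence fin: "finite {p::mono. \<forall>k. p k \<le> m k}" by (rule box_fin)
    have mem: "\<mu> \<in> {p. \<forall>k. p k \<le> m k}" using True by simp
    have "ps_mult (mon a \<mu>) (mon b \<nu>) m = (\<Sum>p\<in>{p. \<forall>k. p k \<le> m k}. if p = \<mu> then (if m = (\<lambda>k. \<mu> k + \<nu> k) then a * b else 0) else 0)"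
      unfolding ps_mult_def by (rule sum.cong[OF refl tm])
    also have "\<dots> = a * b" using fin mem True by simp
    finally show ?thesis using True by (simp add: mon_def)
  next
    case False
    have "ps_mult (mon a \<mu>) (mon b \<nu>) m = (\<Sum>p\<in>{p. \<forall>k. p k \<le> m k}. if p = \<mu> then (if m = (\<lambda>k. \<mu> k + \<nu> k) then a * b else 0) else 0)"
      unfolding ps_mult_def by (rule sum.cong[OF refl tm])
    also have "\<dots> = 0" using False by simp
    finally show ?thesis using False by (simp add: mon_def)
  qed
qed

lemma E_add: "length l1 = length l2 \<Longrightarrow> (\<lambda>k. E l1 k + E l2 k) = E (map2 (+) l1 l2)"
  by (auto simp: E_def fun_eq_iff)

lemma mon_mult: "length l1 = length l2 \<Longrightarrow>
   ps_mult (mon a (E l1)) (mon b (E l2)) = mon (a * b) (E (map2 (+) l1 l2))"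
  by (simp add: mon_mult_gen fs_E E_add)

definition ins :: "nat \<Rightarrow> nat list \<Rightarrow> nat list" where
  "ins j l = take j l @ 0 # drop j l"

lemma E_ins:
  assumes "j \<le> length l"
  shows "(\<lambda>k. if k < j then E l k else if k = j then 0 else E l (k - 1)) = E (ins j l)"
proof
  fix k
  show "(if k < j then E l k else if k = j then 0 else E l (k - 1)) = E (ins j l) k"
  proof -
    consider "k < j" | "k = j" | "j < k" by linarith
    thus ?thesis
    proof cases
      case 1 thus ?thesis using assms by (simp add: E_def ins_def nth_append)
    next
      case 2 thus ?thesis using assms by (simp add: E_def ins_def nth_append)
    next
      case 3
      then obtain d where d: "k = Suc (j + d)" by (metis less_imp_Suc_add)
      thus ?thesis using assms by (auto simp: E_def ins_def nth_append min_def)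
    qed
  qed
qed

lemma E_shift: "(\<lambda>k. case k of 0 \<Rightarrow> 0 | Suc j \<Rightarrow> E l j) = E (0 # l)"
  by (auto simp: E_def fun_eq_iff split: nat.splits)

lemma E_snoc0: "E (l @ [0]) = E l"
  by (auto simp: E_def fun_eq_iff nth_append)

lemma face0_E: "face n 0 (mon c (E l)) = mon c (E (0 # l))"
  by (simp add: face0_mon E_shift)

lemma facelast_E: assumes "n < i" "length l \<le> n" shows "face n i (mon c (E l)) = mon c (E (l @ [0]))"
proof -
  have "face n i (mon c (E l)) = mon c (E l)" by (rule facelast_mon) (use assms in \<open>simp_all add: E_def\<close>)
  thus ?thesis by (simp add: E_snoc0)
qed

lemma facemid_E:
  fixes c :: bit
  assumes i: "1 \<le> i" "i \<le> n" "i \<le> length l" and mu: "l ! (i - 1) = 2 ^ a"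
  shows "face n i (mon c (E l)) = (\<lambda>m. mon c (E (ins i l)) m + mon c (E (ins (i - 1) l)) m)"
proof -
  have "E l (i - 1) = 2 ^ a" using i mu by (simp add: E_def)
  note f = facemid_mon[of i n "E l" a c, OF i(1,2) this]
  have "(\<lambda>k. if k < i - 1 then E l k else if k = i - 1 then 0 else E l (k - 1)) = E (ins (i - 1) l)"
    by (rule E_ins) (use i in simp)
  moreover have "(\<lambda>k. if k < i then E l k else if k = i then 0 else E l (k - 1)) = E (ins i l)"
    by (rule E_ins) (use i in simp)
  ultimately show ?thesis using f by simp
qed



declare add_bit_eq_xor[simp del] mult_bit_eq_and[simp del]

lemma bit_sq: "(c::bit) * c = c" by (cases c) simp_all
lemma bit_dup: "(x::bit) + x = 0" by (cases x) simp_all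
lemma bit_dup2: "(x::bit) + (x + y) = y" by (cases x; cases y) simp_all

lemma faces_x:
  fixes c :: bit
  assumes P: "P = 2 ^ a" and Q: "Q = 2 ^ b"
  shows "face 2 0 (mon c (E [P, Q])) = mon c (E [0, P, Q])"
    "face 2 1 (mon c (E [P, Q])) = (\<lambda>m. mon c (E [P, 0, Q]) m + mon c (E [0, P, Q]) m)"
    "face 2 2 (mon c (E [P, Q])) = (\<lambda>m. mon c (E [P, Q, 0]) m + mon c (E [P, 0, Q]) m)"
    "face 2 3 (mon c (E [P, Q])) = mon c (E [P, Q, 0])"
proof -
  show "face 2 0 (mon c (E [P, Q])) = mon c (E [0, P, Q])" by (rule face0_E)
  show "face 2 1 (mon c (E [P, Q])) = (\<lambda>m. mon c (E [P, 0, Q]) m + mon c (E [0, P, Q]) m)"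
    using facemid_E[of 1 2 "[P, Q]" a c] P by (simp add: ins_def)
  show "face 2 2 (mon c (E [P, Q])) = (\<lambda>m. mon c (E [P, Q, 0]) m + mon c (E [P, 0, Q]) m)"
    using facemid_E[of 2 2 "[P, Q]" b c] Q by (simp add: ins_def)
  show "face 2 3 (mon c (E [P, Q])) = mon c (E [P, Q, 0])"
    using facelast_E[of 2 3 "[P, Q]" c] by simp
qed

lemma calc_x:
  fixes c :: bit
  assumes P: "P = 2 ^ a" and Q: "Q = 2 ^ b"
  defines "F0 \<equiv> mon c (E [0, P, Q])"
    and "F1 \<equiv> (\<lambda>m. mon c (E [P, 0, Q]) m + mon c (E [0, P, Q]) m)"
    and "F2 \<equiv> (\<lambda>m. mon c (E [P, Q, 0]) m + mon c (E [P, 0, Q]) m)"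
    and "F3 \<equiv> mon c (E [P, Q, 0])"
  shows "(\<lambda>m. lsum [F0, \<lambda>m. F1 m + ps_mult F1 F1 m, F2, \<lambda>m. F3 m + ps_mult F3 F3 m] m
             + pw [F0, F1, F2, F3] m)
         = (\<lambda>m. mon c (E [P, P, Q + Q]) m + mon c (E [P + P, Q, Q]) m)"
  unfolding F0_def F1_def F2_def F3_def
  by (simp del: add_bit_eq_xor mult_bit_eq_and add: ps_mult_add1 ps_mult_add2 mon_mult bit_sq)

lemma lsum_cong:
  "list_all2 (\<lambda>t t'. fil b (\<lambda>m. t m - t' m)) ts ts' \<Longrightarrow> fil b (\<lambda>m. lsum ts m - lsum ts' m)"
proof (induction rule: list_all2_induct)
  case (Cons t ts t' ts')
  have "fil b (\<lambda>m. (t m - t' m) + (lsum ts m - lsum ts' m))" using Cons by (intro fil_add) auto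
  thus ?case by (simp add: algebra_simps)
qed simp

lemma pw_cong:
  assumes "list_all2 (\<lambda>t t'. fil (2 * a) (\<lambda>m. t m - t' m)) ts ts'"
    and "\<And>t. t \<in> set ts \<Longrightarrow> fil a t" and "\<And>t. t \<in> set ts' \<Longrightarrow> fil a t"
  shows "fil (3 * a) (\<lambda>m. pw ts m - pw ts' m)"
  using assms
proof (induction rule: list_all2_induct)
  case (Cons t ts t' ts')
  have L: "fil (2 * a) (\<lambda>m. lsum ts m - lsum ts' m)" by (rule lsum_cong) (use Cons in simp)
  have L': "fil a (lsum ts')" using Cons by (intro fil_lsum) auto
  have 1: "fil (a + 2 * a) (ps_mult t (\<lambda>m. lsum ts m - lsum ts' m))" using Cons L by (intro fil_mult) auto
  have 2: "fil (2 * a + a) (ps_mult (\<lambda>m. t m - t' m) (lsum ts'))" using Cons L' by (intro fil_mult) auto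
  have 3: "fil (3 * a) (\<lambda>m. pw ts m - pw ts' m)" using Cons by simp
  have "fil (3 * a) (\<lambda>m. ps_mult t (\<lambda>m. lsum ts m - lsum ts' m) m + ps_mult (\<lambda>m. t m - t' m) (lsum ts') m
       + (pw ts m - pw ts' m))"
    using 1 2 3 by (intro fil_add) (simp_all add: algebra_simps numeral_3_eq_3)
  thus ?case by (simp add: ps_mult_diff1 ps_mult_diff2 algebra_simps)
qed simp

lemma gm_neg_bit:
  fixes f :: "bit pser"
  assumes f: "fil (Suc b) f"
  shows "fil (3 * Suc b) (\<lambda>m. gm_neg f m - (f m + ps_mult f f m))"
    "fil (2 * Suc b) (\<lambda>m. gm_neg f m - f m)"
proof -
  show A: "fil (3 * Suc b) (\<lambda>m. gm_neg f m - (f m + ps_mult f f m))"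
    using gm_neg_exp[OF f] by simp
  have "fil (2 * Suc b) (\<lambda>m. (gm_neg f m - (f m + ps_mult f f m)) + ps_mult f f m)"
    by (intro fil_add fil_mono[OF A]) (use fil_mult[OF f f] in \<open>simp_all add: mult_2\<close>)
  thus "fil (2 * Suc b) (\<lambda>m. gm_neg f m - f m)" by (simp del: add_bit_eq_xor add: algebra_simps)
qed

lemma mdeg_E: "mdeg (E l) = sum_list l"
proof -
  have "mdeg (E l) = sum (E l) {..<length l}" by (rule mdeg_lt) (simp add: E_def)
  also have "\<dots> = (\<Sum>i<length l. l ! i)" by (intro sum.cong) (auto simp: E_def)
  also have "\<dots> = sum_list l" by (simp add: sum_list_sum_nth atLeast0LessThan)
  finally show ?thesis .
qed

lemma fil_mon: "d \<le> mdeg \<mu> \<Longrightarrow> fil d (mon c \<mu>)"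
  by (simp add: fil_def mon_def)

lemma fil_monE: "d \<le> sum_list l \<Longrightarrow> fil d (mon c (E l))"
  by (rule fil_mon) (simp add: mdeg_E)

lemma fil_sum2: "fil d f \<Longrightarrow> fil d g \<Longrightarrow> fil d (\<lambda>m. f m + g m :: bit)"
  by (rule fil_add)

lemma cob_x:
  fixes c :: bit
  assumes P: "P = 2 ^ a" and Q: "Q = 2 ^ b"
  shows "fil (3 * (P + Q)) (\<lambda>m. cob 2 (mon c (E [P, Q])) m
             - (mon c (E [P, P, Q + Q]) m + mon c (E [P + P, Q, Q]) m))"
proof -
  define s where "s = P + Q"
  have "0 < s" using P s_def by simp
  then obtain s' where s': "s = Suc s'" using gr0_implies_Suc by blast
  define F0 where "F0 = mon c (E [0, P, Q])"
  define F1 where "F1 = (\<lambda>m. mon c (E [P, 0, Q]) m + mon c (E [0, P, Q]) m)"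
  define F2 where "F2 = (\<lambda>m. mon c (E [P, Q, 0]) m + mon c (E [P, 0, Q]) m)"
  define F3 where "F3 = mon c (E [P, Q, 0])"
  have fF: "fil s F0" "fil s F1" "fil s F2" "fil s F3"
    unfolding F0_def F1_def F2_def F3_def s_def by (intro fil_add fil_monE; simp)+
  have fFs: "fil (Suc s') F0" "fil (Suc s') F1" "fil (Suc s') F2" "fil (Suc s') F3"
    using fF s' by auto
  have ct: "cterms 2 (mon c (E [P, Q])) = [F0, gm_neg F1, F2, gm_neg F3]"
  proof -
    have u: "[0..<2 + 2] = [0::nat, 1, 2, 3]" by (simp add: upt_rec)
    show ?thesis unfolding cterms_def F0_def F1_def F2_def F3_def u
    proof -
      have ev: "even (0::nat)" "\<not> even (1::nat)" "even (2::nat)" "\<not> even (3::nat)" by auto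
      show "map (\<lambda>i. if even i then face 2 i (mon c (E [P, Q])) else gm_neg (face 2 i (mon c (E [P, Q])))) [0, 1, 2, 3] =
        [mon c (E [0, P, Q]), gm_neg (\<lambda>m. mon c (E [P, 0, Q]) m + mon c (E [0, P, Q]) m),
         \<lambda>m. mon c (E [P, Q, 0]) m + mon c (E [P, 0, Q]) m, gm_neg (mon c (E [P, Q, 0]))]"
        by (simp only: list.map ev if_True if_False faces_x[OF P Q])
    qed
  qed
  define ts where "ts = [F0, gm_neg F1, F2, gm_neg F3]"
  have fts: "\<And>t. t \<in> set ts \<Longrightarrow> fil s t" using fF unfolding ts_def by (auto intro: fil_gm_neg)
  have e1: "fil (3 * s) (\<lambda>m. cob 2 (mon c (E [P, Q])) m - (lsum ts m + pw ts m))"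
    unfolding cob_cterms ct ts_def[symmetric] by (rule foldr_exp[OF fts])
  have e2: "fil (3 * s) (\<lambda>m. lsum ts m - lsum [F0, \<lambda>m. F1 m + ps_mult F1 F1 m, F2, \<lambda>m. F3 m + ps_mult F3 F3 m] m)"
    unfolding ts_def using gm_neg_bit(1)[OF fFs(2)] gm_neg_bit(1)[OF fFs(4)] s'
    by (intro lsum_cong) simp
  have e3: "fil (3 * s) (\<lambda>m. pw ts m - pw [F0, F1, F2, F3] m)"
    unfolding ts_def using gm_neg_bit(2)[OF fFs(2)] gm_neg_bit(2)[OF fFs(4)] s' fF
    by (intro pw_cong) (auto intro: fil_gm_neg)
  have e4: "(\<lambda>m. lsum [F0, \<lambda>m. F1 m + ps_mult F1 F1 m, F2, \<lambda>m. F3 m + ps_mult F3 F3 m] m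
             + pw [F0, F1, F2, F3] m)
         = (\<lambda>m. mon c (E [P, P, Q + Q]) m + mon c (E [P + P, Q, Q]) m)"
    unfolding F0_def F1_def F2_def F3_def by (rule calc_x[OF P Q])
  have "fil (3 * s) (\<lambda>m. (cob 2 (mon c (E [P, Q])) m - (lsum ts m + pw ts m))
      + (lsum ts m - lsum [F0, \<lambda>m. F1 m + ps_mult F1 F1 m, F2, \<lambda>m. F3 m + ps_mult F3 F3 m] m)
      + (pw ts m - pw [F0, F1, F2, F3] m))"
    by (intro fil_add e1 e2 e3)
  moreover have "\<And>m. (cob 2 (mon c (E [P, Q])) m - (lsum ts m + pw ts m))
      + (lsum ts m - lsum [F0, \<lambda>m. F1 m + ps_mult F1 F1 m, F2, \<lambda>m. F3 m + ps_mult F3 F3 m] m)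
      + (pw ts m - pw [F0, F1, F2, F3] m)
      = cob 2 (mon c (E [P, Q])) m - (mon c (E [P, P, Q + Q]) m + mon c (E [P + P, Q, Q]) m)"
    using fun_cong[OF e4] by (simp only: algebra_simps)
  ultimately show ?thesis unfolding s_def by simp
qed

lemma faces_3:
  fixes c :: bit
  assumes A: "A = 2 ^ a1" and B: "B = 2 ^ a2" and C: "C = 2 ^ a3"
  shows "face 3 0 (mon c (E [A, B, C])) = mon c (E [0, A, B, C])"
    "face 3 1 (mon c (E [A, B, C])) = (\<lambda>m. mon c (E [A, 0, B, C]) m + mon c (E [0, A, B, C]) m)"
    "face 3 2 (mon c (E [A, B, C])) = (\<lambda>m. mon c (E [A, B, 0, C]) m + mon c (E [A, 0, B, C]) m)"
    "face 3 3 (mon c (E [A, B, C])) = (\<lambda>m. mon c (E [A, B, C, 0]) m + mon c (E [A, B, 0, C]) m)"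
    "face 3 4 (mon c (E [A, B, C])) = mon c (E [A, B, C, 0])"
proof -
  show "face 3 0 (mon c (E [A, B, C])) = mon c (E [0, A, B, C])" by (rule face0_E)
  show "face 3 1 (mon c (E [A, B, C])) = (\<lambda>m. mon c (E [A, 0, B, C]) m + mon c (E [0, A, B, C]) m)"
    using facemid_E[of 1 3 "[A, B, C]" a1 c] A by (simp add: ins_def)
  show "face 3 2 (mon c (E [A, B, C])) = (\<lambda>m. mon c (E [A, B, 0, C]) m + mon c (E [A, 0, B, C]) m)"
    using facemid_E[of 2 3 "[A, B, C]" a2 c] B by (simp add: ins_def)
  show "face 3 3 (mon c (E [A, B, C])) = (\<lambda>m. mon c (E [A, B, C, 0]) m + mon c (E [A, B, 0, C]) m)"
    using facemid_E[of 3 3 "[A, B, C]" a3 c] C by (simp add: ins_def)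
  show "face 3 4 (mon c (E [A, B, C])) = mon c (E [A, B, C, 0])"
    using facelast_E[of 3 4 "[A, B, C]" c] by simp
qed

lemma cob_y:
  fixes c :: bit
  assumes P: "P = 2 ^ a" and Q: "Q = 2 ^ b"
  defines "Y \<equiv> (\<lambda>m. mon c (E [P, P, Q + Q]) m + mon c (E [P + P, Q, Q]) m)"
  shows "fil (2 * (2 * (P + Q))) (cob 3 Y)"
proof -
  define s where "s = 2 * (P + Q)"
  have "0 < s" using P s_def by simp
  then obtain s' where s': "s = Suc s'" using gr0_implies_Suc by blast
  have QQ: "Q + Q = 2 ^ Suc b" and PP: "P + P = 2 ^ Suc a" using P Q by simp_all
  note f1 = faces_3[OF P P QQ, of c] and f2 = faces_3[OF PP Q Q, of c]
  define G where "G i = face 3 i Y" for i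
  have Gs: "G 0 = (\<lambda>m. mon c (E [0, P, P, Q + Q]) m + mon c (E [0, P + P, Q, Q]) m)"
    "G 1 = (\<lambda>m. (mon c (E [P, 0, P, Q + Q]) m + mon c (E [0, P, P, Q + Q]) m)
                  + (mon c (E [P + P, 0, Q, Q]) m + mon c (E [0, P + P, Q, Q]) m))"
    "G 2 = (\<lambda>m. (mon c (E [P, P, 0, Q + Q]) m + mon c (E [P, 0, P, Q + Q]) m)
                  + (mon c (E [P + P, Q, 0, Q]) m + mon c (E [P + P, 0, Q, Q]) m))"
    "G 3 = (\<lambda>m. (mon c (E [P, P, Q + Q, 0]) m + mon c (E [P, P, 0, Q + Q]) m)
                  + (mon c (E [P + P, Q, Q, 0]) m + mon c (E [P + P, Q, 0, Q]) m))"
    "G 4 = (\<lambda>m. mon c (E [P, P, Q + Q, 0]) m + mon c (E [P + P, Q, Q, 0]) m)"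
    unfolding G_def Y_def face_add by (simp_all only: f1 f2)
  have fG: "fil s (G i)" for i
  proof -
    have "fil s Y" unfolding Y_def s_def by (intro fil_add fil_monE; simp)+
    moreover have "in_vars 3 Y" unfolding Y_def by (intro in_vars_add; simp add: in_vars_def mon_def E_def)
    ultimately show ?thesis unfolding G_def by (intro fil_face)
  qed
  have u: "[0..<3 + 2] = [0::nat, 1, 2, 3, 4]" by (simp add: upt_rec)
  have ev: "even (0::nat)" "\<not> even (1::nat)" "even (2::nat)" "\<not> even (3::nat)" "even (4::nat)" by auto
  have ct: "cterms 3 Y = [G 0, gm_neg (G 1), G 2, gm_neg (G 3), G 4]"
    unfolding cterms_def u G_def by (simp only: list.map ev if_True if_False)
  have fts: "\<And>t. t \<in> set (cterms 3 Y) \<Longrightarrow> fil s t" unfolding ct using fG by (auto intro: fil_gm_neg)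
  have e1: "fil (2 * s) (\<lambda>m. cob 3 Y m - lsum (cterms 3 Y) m)"
    unfolding cob_cterms by (rule foldr_exp1[OF fts])
  have e2: "fil (2 * s) (\<lambda>m. lsum (cterms 3 Y) m - lsum [G 0, G 1, G 2, G 3, G 4] m)"
    unfolding ct using gm_neg_bit(2)[OF fG[of 1, unfolded s']] gm_neg_bit(2)[OF fG[of 3, unfolded s']] s'
    by (intro lsum_cong) simp
  have e3: "lsum [G 0, G 1, G 2, G 3, G 4] = (\<lambda>_. 0)"
    unfolding Gs by (rule ext) (simp add: ac_simps bit_dup bit_dup2)
  have "fil (2 * s) (\<lambda>m. (cob 3 Y m - lsum (cterms 3 Y) m) + (lsum (cterms 3 Y) m - lsum [G 0, G 1, G 2, G 3, G 4] m))"
    by (intro fil_add e1 e2)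
  thus ?thesis unfolding s_def[symmetric] e3 by simp
qed



lemma fixpt:
  fixes D y :: "('a::comm_ring_1) pser"
  assumes fy: "fil (Suc b) y" and fD: "fil t (\<lambda>m. D m - y m)"
    and iD: "in_vars n D" and iy: "in_vars n y"
  shows "\<exists>u. fil t u \<and> in_vars n u \<and> (\<forall>m. D m = y m + u m + ps_mult y u m)"
proof -
  define \<Phi> where "\<Phi> g = (\<lambda>m. D m - y m - ps_mult y g m)" for g
  define it where "it k = (\<Phi> ^^ k) (\<lambda>_. 0)" for k
  have itS: "it (Suc k) = \<Phi> (it k)" for k by (simp add: it_def)
  have Phi_diff: "(\<lambda>m. \<Phi> g m - \<Phi> h m) = (\<lambda>m. - ps_mult y (\<lambda>m. g m - h m) m)" for g h
    by (simp add: \<Phi>_def ps_mult_diff2 fun_eq_iff algebra_simps)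
  have Phi_fil: "fil (Suc k) (\<lambda>m. \<Phi> g m - \<Phi> h m)" if "fil k (\<lambda>m. g m - h m)" for g h k
  proof -
    have "fil (Suc b + k) (ps_mult y (\<lambda>m. g m - h m))" by (rule fil_mult[OF fy that])
    hence "fil (Suc k) (ps_mult y (\<lambda>m. g m - h m))" by (rule fil_mono) simp
    thus ?thesis unfolding Phi_diff by (rule fil_uminus)
  qed
  have a: "fil k (\<lambda>m. it (Suc k) m - it k m)" for k
  proof (induction k)
    case (Suc k) show ?case unfolding itS[of "Suc k"] itS[of k] by (rule Phi_fil[OF Suc[unfolded itS]])
  qed simp
  have bb: "fil k (\<lambda>m. it j m - it k m)" if "k \<le> j" for j k
    using that
  proof (induction j rule: dec_induct)
    case base thus ?case by simp
  next
    case (step j)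
    have "fil k (\<lambda>m. (it (Suc j) m - it j m) + (it j m - it k m))"
      by (intro fil_add step fil_mono[OF a])
    thus ?case by simp
  qed
  define u where "u m = it (Suc (mdeg m)) m" for m
  have c: "fil k (\<lambda>m. u m - it k m)" for k
    unfolding fil_def
  proof (intro allI impI, rule ccontr)
    fix m assume ne: "u m - it k m \<noteq> 0" and lt: "\<not> k \<le> mdeg m"
    have "fil (Suc (mdeg m)) (\<lambda>x. it k x - it (Suc (mdeg m)) x)" by (rule bb) (use lt in simp)
    hence "it k m - it (Suc (mdeg m)) m = 0" by (rule fil_at)
    thus False using ne unfolding u_def by simp
  qed
  have d: "\<Phi> u m = u m" for m
  proof -
    have "fil (Suc (mdeg m)) (\<lambda>x. \<Phi> u x - \<Phi> (it (mdeg m)) x)" by (rule Phi_fil[OF c])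
    hence "\<Phi> u m - \<Phi> (it (mdeg m)) m = 0" by (rule fil_at)
    thus ?thesis unfolding u_def itS[symmetric] by simp
  qed
  have e: "fil t (it k)" for k
  proof (induction k)
    case 0 thus ?case by (simp add: it_def)
  next
    case (Suc k)
    have "fil (Suc b + t) (ps_mult y (it k))" by (rule fil_mult[OF fy Suc])
    hence "fil t (ps_mult y (it k))" by (rule fil_mono) simp
    hence "fil t (\<lambda>m. (D m - y m) - ps_mult y (it k) m)" by (intro fil_diff fD)
    thus ?case unfolding itS \<Phi>_def .
  qed
  have fu: "fil t u" unfolding fil_def u_def using e unfolding fil_def by blast
  have iDy: "in_vars n (\<lambda>m. D m - y m)" by (rule in_vars_diff[OF iD iy])
  have f: "in_vars n (it k)" for k
  proof (induction k)
    case 0 thus ?case by (simp add: it_def)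
  next
    case (Suc k)
    have "in_vars n (\<lambda>m. (D m - y m) - ps_mult y (it k) m)"
      by (intro in_vars_diff iDy in_vars_mult iy Suc)
    thus ?case unfolding itS \<Phi>_def .
  qed
  have iu: "in_vars n u" unfolding in_vars_def u_def using f unfolding in_vars_def by blast
  have "\<forall>m. D m = y m + u m + ps_mult y u m"
  proof
    fix m
    have "u m = D m - y m - ps_mult y u m" using d[of m] by (simp add: \<Phi>_def)
    thus "D m = y m + u m + ps_mult y u m" by (simp add: algebra_simps)
  qed
  thus ?thesis using fu iu by blast
qed

lemma hcomp_eq: "(\<And>m. f m \<noteq> 0 \<Longrightarrow> mdeg m = d) \<Longrightarrow> hcomp d f = f"
  unfolding hcomp_def by (rule ext) (metis)

lemma fil_at0: "fil (Suc b) f \<Longrightarrow> f (\<lambda>_. 0) = 0"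
proof -
  assume f: "fil (Suc b) f"
  have "mdeg (\<lambda>_. 0) = 0" by (simp add: mdeg_def)
  thus ?thesis using f unfolding fil_def by fastforce
qed

lemma main_bit:
  fixes c :: bit
  assumes P: "P = 2 ^ a" and Q: "Q = 2 ^ b"
  defines "Y \<equiv> (\<lambda>m. mon c (E [P, P, Q + Q]) m + mon c (E [P + P, Q, Q]) m)"
  shows "tss_d 2 (P + Q) (P + Q) (mon c (E [P, Q])) Y"
proof -
  define s where "s = P + Q"
  define x where "x = mon c (E [P, Q])"
  have "0 < P" using P by simp
  hence s1: "1 \<le> s" using s_def by simp
  obtain s' where s': "s = Suc s'" using s1 by (cases s) auto
  have ix: "in_vars 2 x" unfolding x_def by (simp add: in_vars_def mon_def E_def)
  have fx: "fil s x" unfolding x_def s_def by (rule fil_monE) simp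
  have iY: "in_vars 3 Y" unfolding Y_def by (intro in_vars_add; simp add: in_vars_def mon_def E_def)
  have fY: "fil (2 * s) Y" unfolding Y_def s_def by (intro fil_add fil_monE; simp)+
  have cx: "fil (3 * s) (\<lambda>m. cob 2 x m - Y m)" unfolding x_def Y_def s_def by (rule cob_x[OF P Q])
  have cy: "fil (2 * (2 * s)) (cob 3 Y)" unfolding Y_def s_def by (rule cob_y[OF P Q])
  have iD: "in_vars 3 (cob 2 x)" using in_vars_cob[OF ix] by (simp add: numeral_3_eq_3)
  have fY': "fil (Suc (2 * s - 1)) Y" using fY s1 by simp
  obtain u where fu: "fil (3 * s) u" and iu: "in_vars 3 u"
    and eq: "\<And>m. cob 2 x m = Y m + u m + ps_mult Y u m"
    using fixpt[OF fY' cx iD iY] by blast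
  have Zx: "Zr 2 s s x"
    unfolding Zr_def cochain_def
  proof (intro conjI)
    show "in_vars 2 x" by (rule ix)
    show "x (\<lambda>_. 0) = 0" by (rule fil_at0[of s']) (use fx s' in simp)
    show "fil s x" by (rule fx)
    have "fil (s + s) (\<lambda>m. (cob 2 x m - Y m) + Y m)"
      by (intro fil_add fil_mono[OF cx] fil_mono[OF fY]) simp_all
    thus "fil (s + s) (cob 2 x)" by simp
  qed
  have hx: "hcomp s x = x"
    by (rule hcomp_eq) (simp add: x_def mon_def mdeg_E s_def split: if_splits)
  have ZY: "Zr 3 s (s + s) Y"
    unfolding Zr_def cochain_def
  proof (intro conjI)
    show "in_vars 3 Y" by (rule iY)
    show "Y (\<lambda>_. 0) = 0" by (rule fil_at0[of "2 * s - 1"]) (use fY s1 in simp)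
    show "fil (s + s) Y" using fY by (simp add: mult_2)
    show "fil (s + s + s) (cob 3 Y)" by (rule fil_mono[OF cy]) simp
  qed
  have hY: "hcomp (s + s) Y = Y"
  proof (rule hcomp_eq)
    fix m assume "Y m \<noteq> 0"
    hence "m = E [P, P, Q + Q] \<or> m = E [P + P, Q, Q]" unfolding Y_def mon_def by (auto split: if_splits)
    thus "mdeg m = s + s" by (auto simp: mdeg_E s_def)
  qed
  have Zu: "Zr 3 (s - 1) (s + s + 1) u"
    unfolding Zr_def cochain_def
  proof (intro conjI)
    show "in_vars 3 u" by (rule iu)
    show "u (\<lambda>_. 0) = 0" by (rule fil_at0[of "3 * s - 1"]) (use fu s1 in simp)
    show "fil (s + s + 1) u" by (rule fil_mono[OF fu]) (use s1 in simp)
    have "fil (3 * s) (cob 3 u)" by (rule fil_cob[OF iu fu])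
    thus "fil (s + s + 1 + (s - 1)) (cob 3 u)" by (rule fil_mono) (use s1 in simp)
  qed
  have Z0: "Zr 2 (s - 1) (s + 1) (\<lambda>_. 0::bit)"
    unfolding Zr_def cochain_def by (simp add: cob_zero)
  have eqn: "cob 2 x = gm_add Y (gm_add u (cob 2 (\<lambda>_. 0)))"
  proof -
    have g: "gm_add u (cob 2 (\<lambda>_. 0::bit)) = u" by (simp add: cob_zero gm_add_def)
    show ?thesis unfolding g by (simp add: gm_add_def fun_eq_iff eq)
  qed
  show ?thesis unfolding tss_d_def s_def[symmetric] x_def[symmetric]
    using Zx hx ZY hY Zu Z0 eqn by (intro exI[of _ x] exI[of _ Y] exI[of _ u] exI[of _ "\<lambda>_. 0"]) simp
qed

theorem mainTheorem5:
  fixes i j :: nat and c :: bit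
  assumes "i \<noteq> j"
  shows "tss_d 2 (2 ^ i + 2 ^ j) (2 ^ i + 2 ^ j)
           (monom c [2 ^ i, 2 ^ j])
           (\<lambda>m. monom (c ^ 2) [2 ^ i, 2 ^ i, 2 ^ (j + 1)] m
                - monom (c ^ 2) [2 ^ (i + 1), 2 ^ j, 2 ^ j] m)"
proof -
  have c2: "c ^ 2 = c" by (cases c) simp_all
  have e: "(\<lambda>m. monom (c ^ 2) [2 ^ i, 2 ^ i, 2 ^ (j + 1)] m - monom (c ^ 2) [2 ^ (i + 1), 2 ^ j, 2 ^ j] m)
     = (\<lambda>m. mon c (E [2 ^ i, 2 ^ i, 2 ^ j + 2 ^ j]) m + mon c (E [2 ^ i + 2 ^ i, 2 ^ j, 2 ^ j]) m)"
    by (simp add: monom_E c2 mult_2)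
  have m: "tss_d 2 (2 ^ i + 2 ^ j) (2 ^ i + 2 ^ j) (mon c (E [2 ^ i, 2 ^ j]))
     (\<lambda>m. mon c (E [2 ^ i, 2 ^ i, 2 ^ j + 2 ^ j]) m + mon c (E [2 ^ i + 2 ^ i, 2 ^ j, 2 ^ j]) m)"
    by (rule main_bit) simp_all
  show ?thesis apply (subst e) unfolding monom_E by (rule m)
qed


end
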